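(* Let $M_{i}=\begin{pmatrix}a_{i} & b_{i}\\ c_{i} & d_{i}\end{pmatrix}$, $i\ge1$, be any sequence of $2\times2$ complex matrices, and let $(G_i,F_i)$, $i\ge1$, be a sequence of nonzero row vectors. Then $(G_{i},F_{i})$ is a left eigenvector of $(M_i)$ (with some eigenvalues $\lambda_i$) if and only if $\begin{pmatrix}F_{i}\\ -G_{i}\end{pmatrix}$ is a right eigenvector of $(M_i)$ (with some eigenvalues $\alpha_i$). Moreover, if $(G_i,F_i)$ is a left eigenvector with eigenvalues $\lambda_i$, $\begin{pmatrix}F_{i}\\ -G_{i}\end{pmatrix}$ is the corresponding right eigenvector with eigenvalues $\alpha_i$, and $F_{i}\neq0$ for all $i$, then setting $U_{i}=\begin{pmatrix}F_{i}^{-1} & 0\\ G_{i} & F_{i}\end{pmatrix}$ we have \[ U_{i}M_{i}U_{i+1}^{-1}=\begin{pmatrix}\alpha_{i} & \frac{b_{i}}{F_{i}F_{i+1}}\\ 0 & \lambda_{i}\end{pmatrix}, \] and in particular $\alpha_{i}\lambda_{i}=\det(M_{i})$.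
   Context: For a sequence of $2\times2$ matrices $M_i$: a sequence $v(i)$ of nonzero row vectors is a left eigenvector with eigenvalues $\lambda(i)\in\mathbb{C}$ if $v(i)M_{i}=\lambda(i)v(i+1)$ for all $i$; a sequence $u(i)$ of nonzero column vectors is a right eigenvector with eigenvalues $\alpha(i)\in\mathbb{C}$ if $M_{i}u(i+1)=\alpha(i)u(i)$ for all $i$. *)

theory Defs
  imports "HOL-Analysis.Analysis"
begin

text \<open>Sequences are indexed by i \<ge> 1 (values at index 0 are irrelevant).
  Row vectors and column vectors are both represented as complex^2;
  v v* A is the row-vector-times-matrix product, A *v u the matrix-times-column product.\<close>

definition left_eigenvector ::
  "(nat \<Rightarrow> complex^2^2) \<Rightarrow> (nat \<Rightarrow> complex^2) \<Rightarrow> (nat \<Rightarrow> complex) \<Rightarrow> bool" where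
  "left_eigenvector M v lam \<longleftrightarrow>
     (\<forall>i\<ge>1. v i \<noteq> 0) \<and> (\<forall>i\<ge>1. v i v* M i = lam i *s v (i + 1))"

definition right_eigenvector ::
  "(nat \<Rightarrow> complex^2^2) \<Rightarrow> (nat \<Rightarrow> complex^2) \<Rightarrow> (nat \<Rightarrow> complex) \<Rightarrow> bool" where
  "right_eigenvector M u alpha \<longleftrightarrow>
     (\<forall>i\<ge>1. u i \<noteq> 0) \<and> (\<forall>i\<ge>1. M i *v u (i + 1) = alpha i *s u i)"

definition mat2 :: "'a \<Rightarrow> 'a \<Rightarrow> 'a \<Rightarrow> 'a \<Rightarrow> 'a^2^2" where
  "mat2 a b c d = (\<chi> i j. if i = 1 then (if j = 1 then a else b) else (if j = 1 then c else d))"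

definition vec2 :: "'a \<Rightarrow> 'a \<Rightarrow> 'a^2" where
  "vec2 x y = (\<chi> i. if i = 1 then x else y)"

end

theory Submission
  imports Defs
begin

lemma vec2_nth [simp]: "vec2 x y $ 1 = x" "vec2 x y $ 2 = y"
  by (simp_all add: vec2_def)

lemma vec2_eq: "(v::'a^2) = w \<longleftrightarrow> v$1 = w$1 \<and> v$2 = w$2"
  by (metis (mono_tags) exhaust_2 vec_eq_iff)

lemma mat2_nth [simp]: "mat2 a b c d $ 1 $ 1 = a" "mat2 a b c d $ 1 $ 2 = b"
  "mat2 a b c d $ 2 $ 1 = c" "mat2 a b c d $ 2 $ 2 = d"
  by (simp_all add: mat2_def)

lemma mat_eq2: "(A::'a^2^2) = B \<longleftrightarrow> A$1$1 = B$1$1 \<and> A$1$2 = B$1$2 \<and> A$2$1 = B$2$1 \<and> A$2$2 = B$2$2"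
  by (metis vec2_eq)

lemma vm2: "(v::complex^2) v* M = vec2 (v$1*M$1$1 + v$2*M$2$1) (v$1*M$1$2 + v$2*M$2$2)"
  by (simp add: vec2_eq vector_matrix_mult_def sum_2)

lemma mv2: "(M::complex^2^2) *v x = vec2 (M$1$1*x$1 + M$1$2*x$2) (M$2$1*x$1 + M$2$2*x$2)"
  by (simp add: vec2_eq matrix_vector_mult_def sum_2)

lemma mm2: "((A::complex^2^2) ** B) $ i $ j = A$i$1*B$1$j + A$i$2*B$2$j"
  by (simp add: matrix_matrix_mult_def sum_2)

lemma matrix_inv_eq:
  fixes A B :: "complex^2^2"
  assumes "A ** B = mat 1" "B ** A = mat 1"
  shows "matrix_inv A = B"
proof -
  let ?C = "matrix_inv A"
  have "A ** ?C = mat 1 \<and> ?C ** A = mat 1"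
    unfolding matrix_inv_def by (rule someI[where x=B]) (use assms in auto)
  then have "?C = ?C ** (A ** B)" using assms by (simp add: matrix_mul_rid)
  also have "\<dots> = (?C ** A) ** B" by (simp add: matrix_mul_assoc)
  also have "\<dots> = B" using \<open>A ** ?C = mat 1 \<and> ?C ** A = mat 1\<close> by (simp add: matrix_mul_lid)
  finally show ?thesis .
qed

lemma left_iff:
  fixes x y g f :: complex
  assumes "g \<noteq> 0 \<or> f \<noteq> 0"
  shows "(\<exists>l. x = l*g \<and> y = l*f) \<longleftrightarrow> x*f - y*g = 0"
proof
  assume "\<exists>l. x = l*g \<and> y = l*f" then show "x*f - y*g = 0" by (auto simp: algebra_simps)
next
  assume h: "x*f - y*g = 0"
  show "\<exists>l. x = l*g \<and> y = l*f"
  proof (cases "f = 0")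
    case True
    then have "g \<noteq> 0" using assms by auto
    then show ?thesis using h True by (intro exI[of _ "x/g"]) (auto simp: field_simps)
  next
    case False
    then show ?thesis using h by (intro exI[of _ "y/f"]) (auto simp: field_simps)
  qed
qed

lemma right_iff:
  fixes u w g f :: complex
  assumes "g \<noteq> 0 \<or> f \<noteq> 0"
  shows "(\<exists>a. u = a*f \<and> w = -(a*g)) \<longleftrightarrow> u*g + w*f = 0"
proof
  assume "\<exists>a. u = a*f \<and> w = -(a*g)" then show "u*g + w*f = 0" by (auto simp: algebra_simps)
next
  assume h: "u*g + w*f = 0"
  show "\<exists>a. u = a*f \<and> w = -(a*g)"
  proof (cases "f = 0")
    case True
    then have "g \<noteq> 0" using assms by auto
    then show ?thesis using h True by (intro exI[of _ "-w/g"]) (auto simp: field_simps)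
  next
    case False
    then show ?thesis using h by (intro exI[of _ "u/f"]) (simp add: field_simps, algebra)
  qed
qed

theorem lemma26:
  fixes M :: "nat \<Rightarrow> complex^2^2" and G F :: "nat \<Rightarrow> complex"
  assumes nz: "\<forall>i\<ge>1. vec2 (G i) (F i) \<noteq> 0"
  shows "((\<exists>lam. left_eigenvector M (\<lambda>i. vec2 (G i) (F i)) lam) \<longleftrightarrow>
           (\<exists>alpha. right_eigenvector M (\<lambda>i. vec2 (F i) (- G i)) alpha))
       \<and> (\<forall>lam alpha. left_eigenvector M (\<lambda>i. vec2 (G i) (F i)) lam \<longrightarrow>
           right_eigenvector M (\<lambda>i. vec2 (F i) (- G i)) alpha \<longrightarrow>
           (\<forall>i\<ge>1. F i \<noteq> 0) \<longrightarrow>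
           (\<forall>i\<ge>1.
              mat2 (inverse (F i)) 0 (G i) (F i) ** M i **
                matrix_inv (mat2 (inverse (F (i + 1))) 0 (G (i + 1)) (F (i + 1)))
              = mat2 (alpha i) ((M i $ 1 $ 2) / (F i * F (i + 1))) 0 (lam i)
              \<and> alpha i * lam i = det (M i)))"
proof -
  have nz': "G i \<noteq> 0 \<or> F i \<noteq> 0" if "i \<ge> 1" for i
    using nz that by (auto simp: vec2_eq)
  have nz2: "vec2 (F i) (- G i) \<noteq> 0" if "i \<ge> 1" for i
    using nz'[OF that] by (auto simp: vec2_eq)
  define P where "P i \<longleftrightarrow> (G i * M i$1$1 + F i * M i$2$1) * F (i+1)
      - (G i * M i$1$2 + F i * M i$2$2) * G (i+1) = 0" for i
  have L: "(\<exists>l. vec2 (G i) (F i) v* M i = l *s vec2 (G (i+1)) (F (i+1))) \<longleftrightarrow> P i"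
    if "i \<ge> 1" for i
    unfolding P_def vm2
    by (subst left_iff[symmetric]) (use nz'[of "i+1"] that in \<open>auto simp: vec2_eq\<close>)
  have R: "(\<exists>a. M i *v vec2 (F (i+1)) (- G (i+1)) = a *s vec2 (F i) (- G i)) \<longleftrightarrow> P i"
    if "i \<ge> 1" for i
  proof -
    have "(\<exists>a. M i *v vec2 (F (i+1)) (- G (i+1)) = a *s vec2 (F i) (- G i)) \<longleftrightarrow>
      (\<exists>a. (M i$1$1 * F (i+1) - M i$1$2 * G(i+1)) = a * F i \<and>
           (M i$2$1 * F (i+1) - M i$2$2 * G(i+1)) = -(a * G i))"
      unfolding mv2 by (simp add: vec2_eq)
    also have "\<dots> \<longleftrightarrow> P i"
      by (subst right_iff) (use nz'[OF that] in \<open>auto simp: P_def algebra_simps\<close>)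
    finally show ?thesis .
  qed
  have part1: "(\<exists>lam. left_eigenvector M (\<lambda>i. vec2 (G i) (F i)) lam) \<longleftrightarrow> (\<forall>i\<ge>1. P i)"
  proof
    assume "\<exists>lam. left_eigenvector M (\<lambda>i. vec2 (G i) (F i)) lam"
    then show "\<forall>i\<ge>1. P i" using L unfolding left_eigenvector_def by blast
  next
    assume "\<forall>i\<ge>1. P i"
    then have "\<forall>i. \<exists>l. i \<ge> 1 \<longrightarrow> vec2 (G i) (F i) v* M i = l *s vec2 (G (i+1)) (F (i+1))"
      using L by blast
    then obtain lam where "\<forall>i. i \<ge> 1 \<longrightarrow> vec2 (G i) (F i) v* M i = lam i *s vec2 (G (i+1)) (F (i+1))"
      by metis
    then show "\<exists>lam. left_eigenvector M (\<lambda>i. vec2 (G i) (F i)) lam"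
      using nz unfolding left_eigenvector_def by blast
  qed
  have part2: "(\<exists>alpha. right_eigenvector M (\<lambda>i. vec2 (F i) (- G i)) alpha) \<longleftrightarrow> (\<forall>i\<ge>1. P i)"
  proof
    assume "\<exists>alpha. right_eigenvector M (\<lambda>i. vec2 (F i) (- G i)) alpha"
    then show "\<forall>i\<ge>1. P i" using R unfolding right_eigenvector_def by blast
  next
    assume "\<forall>i\<ge>1. P i"
    then have "\<forall>i. \<exists>a. i \<ge> 1 \<longrightarrow> M i *v vec2 (F (i+1)) (- G (i+1)) = a *s vec2 (F i) (- G i)"
      using R by blast
    then obtain alpha where "\<forall>i. i \<ge> 1 \<longrightarrow> M i *v vec2 (F (i+1)) (- G (i+1)) = alpha i *s vec2 (F i) (- G i)"
      by metis
    then show "\<exists>alpha. right_eigenvector M (\<lambda>i. vec2 (F i) (- G i)) alpha"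
      using nz2 unfolding right_eigenvector_def by blast
  qed
  have part3: "mat2 (inverse (F i)) 0 (G i) (F i) ** M i **
                matrix_inv (mat2 (inverse (F (i + 1))) 0 (G (i + 1)) (F (i + 1)))
              = mat2 (alpha i) ((M i $ 1 $ 2) / (F i * F (i + 1))) 0 (lam i)
              \<and> alpha i * lam i = det (M i)"
    if le: "left_eigenvector M (\<lambda>i. vec2 (G i) (F i)) lam"
      and re: "right_eigenvector M (\<lambda>i. vec2 (F i) (- G i)) alpha"
      and Fnz: "\<forall>i\<ge>1. F i \<noteq> 0" and i: "i \<ge> 1" for lam alpha i
  proof -
    define a where "a = M i$1$1"
    define b where "b = M i$1$2"
    define c where "c = M i$2$1"
    define d where "d = M i$2$2"
    have F0: "F i \<noteq> 0" and F1: "F (i+1) \<noteq> 0" using Fnz i by auto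
    have l: "vec2 (G i) (F i) v* M i = lam i *s vec2 (G (i+1)) (F (i+1))"
      using le i unfolding left_eigenvector_def by auto
    have r: "M i *v vec2 (F (i+1)) (- G (i+1)) = alpha i *s vec2 (F i) (- G i)"
      using re i unfolding right_eigenvector_def by auto
    from l have l1: "G i * a + F i * c = lam i * G (i+1)"
      and l2: "G i * b + F i * d = lam i * F (i+1)"
      unfolding vm2 a_def b_def c_def d_def by (auto simp: vec2_eq)
    from r have r1: "a * F (i+1) - b * G (i+1) = alpha i * F i"
      and r2: "c * F (i+1) - d * G (i+1) = - (alpha i * G i)"
      unfolding mv2 a_def b_def c_def d_def by (auto simp: vec2_eq)
    have inv: "matrix_inv (mat2 (inverse (F (i + 1))) 0 (G (i + 1)) (F (i + 1)))
        = mat2 (F (i+1)) 0 (- G (i+1)) (inverse (F (i+1)))"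
      by (rule matrix_inv_eq) (use F1 in \<open>auto simp: mat_eq2 mm2 mat_def field_simps\<close>)
    have eq1: "mat2 (inverse (F i)) 0 (G i) (F i) ** M i **
                mat2 (F (i+1)) 0 (- G (i+1)) (inverse (F (i+1)))
              = mat2 (alpha i) (b / (F i * F (i + 1))) 0 (lam i)"
    proof -
      have e1: "(a * F (i+1) - b * G (i+1)) / F i = alpha i" using r1 F0 by (simp add: field_simps)
      have e2: "(G i * a + F i * c) * F (i+1) - (G i * b + F i * d) * G (i+1) = 0"
        using l1 l2 by (simp add: algebra_simps)
      have e3: "(G i * b + F i * d) / F (i+1) = lam i" using l2 F1 by (simp add: field_simps)
      show ?thesis
        unfolding mat_eq2 mm2 using e1 e2 e3 F0 F1
        by (simp add: a_def[symmetric] b_def[symmetric] c_def[symmetric] d_def[symmetric] field_simps, use l2 in algebra)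
    qed
    have "alpha i * lam i * (F i * F (i+1)) = (a*d - b*c) * (F i * F (i+1))"
    proof -
      have "alpha i * lam i * (F i * F (i+1)) = (alpha i * F i) * (lam i * F (i+1))" by simp
      also have "\<dots> = (a * F (i+1) - b * G (i+1)) * (G i * b + F i * d)" using r1 l2 by simp
      also have "\<dots> = a * F (i+1) * (G i * b + F i * d) - b * (G (i+1) * (G i * b + F i * d))"
        by (simp add: algebra_simps)
      also have "G (i+1) * (G i * b + F i * d) = F (i+1) * (G i * a + F i * c)"
        using l1 l2 by (simp add: algebra_simps)
      also have "a * F (i+1) * (G i * b + F i * d) - b * (F (i+1) * (G i * a + F i * c))
          = (a*d - b*c) * (F i * F (i+1))" by (simp add: algebra_simps)
      finally show ?thesis .
    qed
    then have "alpha i * lam i = a*d - b*c" using F0 F1 by simp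
    then have "alpha i * lam i = det (M i)"
      by (simp add: det_2 a_def b_def c_def d_def)
    with eq1 inv show ?thesis by (simp add: b_def)
  qed
  show ?thesis using part1 part2 part3 by blast
qed

end
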